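(* Let $H$ be a graph with at least one edge, and let $m \leq e(H)$ be a positive integer. Then there exists a spanning subgraph $H' \subseteq H$ with exactly $m$ edges satisfying: (S1) $\Delta(H') - \delta(H') \leq \Delta(H) - \delta(H) + 2$; (S2) $\Delta(H \setminus H') \leq (\Delta(H) + 1)\frac{e(H) - m}{e(H)} + 1$.
   Context: $e(H)$ is the number of edges, $\Delta(\cdot)$ and $\delta(\cdot)$ denote maximum and minimum degree. A spanning subgraph has the same vertex set as $H$. $H\setminus H'$ denotes the spanning subgraph of $H$ with edge set $E(H)\setminus E(H')$. *)

theory Defs
  imports Main Complex_Main
begin

text \<open>A finite simple graph is given by a finite vertex set V and an edge set E
of 2-element subsets of V. A spanning subgraph has the same vertex set V and an
edge set E' \<subseteq> E.\<close>

definition graph :: "'a set \<Rightarrow> 'a set set \<Rightarrow> bool" where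
  "graph V E \<longleftrightarrow> finite V \<and> (\<forall>e\<in>E. e \<subseteq> V \<and> card e = 2)"

definition degree :: "'a set set \<Rightarrow> 'a \<Rightarrow> nat" where
  "degree E v = card {e \<in> E. v \<in> e}"

definition max_degree :: "'a set \<Rightarrow> 'a set set \<Rightarrow> nat" where
  "max_degree V E = Max (degree E ` V)"

definition min_degree :: "'a set \<Rightarrow> 'a set set \<Rightarrow> nat" where
  "min_degree V E = Min (degree E ` V)"

end

theory Submission
  imports Defs
begin

definition proper :: "'a set set \<Rightarrow> ('a set \<Rightarrow> nat) \<Rightarrow> nat \<Rightarrow> bool" where
  "proper F col c \<longleftrightarrow> (\<forall>e\<in>F. col e < c) \<and>
     (\<forall>e\<in>F. \<forall>f\<in>F. e \<noteq> f \<longrightarrow> e \<inter> f \<noteq> {} \<longrightarrow> col e \<noteq> col f)"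

definition miss :: "'a set set \<Rightarrow> ('a set \<Rightarrow> nat) \<Rightarrow> 'a \<Rightarrow> nat \<Rightarrow> bool" where
  "miss F col v a \<longleftrightarrow> (\<forall>e\<in>F. v \<in> e \<longrightarrow> col e \<noteq> a)"

lemma proper_same:
  assumes "proper F col c" "e \<in> F" "f \<in> F" "v \<in> e" "v \<in> f" "col e = col f"
  shows "e = f"
  using assms unfolding proper_def by blast

lemma exists_miss:
  assumes "finite F" "proper F col c" "degree F v < c"
  shows "\<exists>a<c. miss F col v a"
proof (rule ccontr)
  assume "\<not> ?thesis"
  hence "{0..<c} \<subseteq> col ` {e\<in>F. v\<in>e}" unfolding miss_def by auto
  moreover have "inj_on col {e\<in>F. v\<in>e}"
    unfolding inj_on_def using proper_same[OF assms(2)] by blast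
  ultimately have "c \<le> card {e\<in>F. v\<in>e}"
    by (metis (no_types, lifting) card_atLeastLessThan card_image card_mono assms(1) finite_imageI
        finite_subset mem_Collect_eq subsetI diff_zero)
  thus False using assms(3) unfolding degree_def by simp
qed

lemma card2E:
  assumes "card e = 2" obtains u w where "e = {u,w}" "u \<noteq> w"
  using assms by (metis card_2_iff)

definition kadj :: "'a set set \<Rightarrow> ('a set \<Rightarrow> nat) \<Rightarrow> nat \<Rightarrow> nat \<Rightarrow> ('a \<times> 'a) set" where
  "kadj F col a b = {(u,w). {u,w} \<in> F \<and> (col {u,w} = a \<or> col {u,w} = b)}"

definition comp :: "'a set set \<Rightarrow> ('a set \<Rightarrow> nat) \<Rightarrow> nat \<Rightarrow> nat \<Rightarrow> 'a \<Rightarrow> 'a set" where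
  "comp F col a b z = {w. (z,w) \<in> (kadj F col a b)\<^sup>*}"

definition swc :: "nat \<Rightarrow> nat \<Rightarrow> nat \<Rightarrow> nat" where
  "swc a b c = (if c = a then b else if c = b then a else c)"

definition kswap :: "'a set set \<Rightarrow> ('a set \<Rightarrow> nat) \<Rightarrow> nat \<Rightarrow> nat \<Rightarrow> 'a set \<Rightarrow> 'a set \<Rightarrow> nat" where
  "kswap F col a b K = (\<lambda>e. if e \<in> F \<and> (col e = a \<or> col e = b) \<and> e \<subseteq> K then swc a b (col e) else col e)"

lemma comp_closed:
  assumes "\<forall>e\<in>F. card e = 2" "e \<in> F" "col e = a \<or> col e = b" "v \<in> e" "v \<in> comp F col a b z"
  shows "e \<subseteq> comp F col a b z"
proof -
  obtain u w where e: "e = {u,w}" "u \<noteq> w" using assms(1,2) card2E by blast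
  have "(u,w) \<in> kadj F col a b" "(w,u) \<in> kadj F col a b"
    using assms(2,3) e by (auto simp: kadj_def insert_commute)
  thus ?thesis using assms(4,5) e unfolding comp_def
    by (auto intro: rtrancl_into_rtrancl)
qed

lemma kswap_proper:
  assumes tw: "\<forall>e\<in>F. card e = 2" and pr: "proper F col c" and ab: "a < c" "b < c"
  shows "proper F (kswap F col a b (comp F col a b z)) c"
proof -
  let ?K = "comp F col a b z"
  let ?c = "kswap F col a b ?K"
  have range: "\<forall>e\<in>F. ?c e < c" using pr ab unfolding proper_def kswap_def swc_def by auto
  have "?c e \<noteq> ?c f" if hyp: "e\<in>F" "f\<in>F" "e\<noteq>f" "e\<inter>f\<noteq>{}" for e f
  proof -
    obtain v where v: "v\<in>e" "v\<in>f" using hyp(4) by blast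
    have ne: "col e \<noteq> col f" using pr hyp unfolding proper_def by blast
    consider (ee) "(col e = a \<or> col e = b) \<and> e \<subseteq> ?K" | (ne') "\<not>((col e = a \<or> col e = b) \<and> e \<subseteq> ?K)" by blast
    then show ?thesis
    proof cases
      case ee
      then have "v \<in> ?K" using v by auto
      show ?thesis
      proof (cases "col f = a \<or> col f = b")
        case True
        then have "f \<subseteq> ?K" using comp_closed[OF tw hyp(2) True v(2) \<open>v\<in>?K\<close>] by simp
        then show ?thesis using ee True ne hyp(1,2) unfolding kswap_def swc_def by auto
      next
        case False
        then show ?thesis using ee hyp(1,2) unfolding kswap_def swc_def by auto
      qed
    next
      case ne'
      show ?thesis
      proof (cases "(col f = a \<or> col f = b) \<and> f \<subseteq> ?K")
        case True
        then have "v \<in> ?K" using v by auto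
        have "\<not>(col e = a \<or> col e = b)"
          using comp_closed[OF tw hyp(1) _ v(1) \<open>v\<in>?K\<close>] ne' by blast
        then show ?thesis using True hyp(1,2) ne' unfolding kswap_def swc_def by auto
      next
        case False
        then show ?thesis using ne' ne hyp(1,2) unfolding kswap_def by auto
      qed
    qed
  qed
  thus ?thesis using range unfolding proper_def by blast
qed

lemma kswap_out:
  assumes "v \<notin> comp F col a b z" "v \<in> e"
  shows "kswap F col a b (comp F col a b z) e = col e"
  using assms unfolding kswap_def by auto

lemma kswap_miss_out:
  assumes "v \<notin> comp F col a b z"
  shows "miss F (kswap F col a b (comp F col a b z)) v d \<longleftrightarrow> miss F col v d"
  using assms kswap_out unfolding miss_def by metis

lemma kswap_miss_in:
  assumes tw: "\<forall>e\<in>F. card e = 2" and "v \<in> comp F col a b z" "a \<noteq> b"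
  shows "miss F (kswap F col a b (comp F col a b z)) v d \<longleftrightarrow> miss F col v (swc a b d)"
proof -
  let ?K = "comp F col a b z"
  have "kswap F col a b ?K e = d \<longleftrightarrow> col e = swc a b d" if "e \<in> F" "v \<in> e" for e
  proof (cases "col e = a \<or> col e = b")
    case True
    then have "e \<subseteq> ?K" using comp_closed[OF tw that(1) True that(2) assms(2)] by simp
    then show ?thesis using True that assms(3) unfolding kswap_def swc_def by auto
  next
    case False
    then show ?thesis using that assms(3) unfolding kswap_def swc_def by auto
  qed
  thus ?thesis unfolding miss_def by auto
qed


lemma conn_card:
  fixes u :: 'a
  assumes fin: "finite H" and tw: "\<forall>e\<in>H. card e = 2"
  defines "A \<equiv> {(u,w). {u,w} \<in> H}"
  defines "P \<equiv> {v. (u,v) \<in> A\<^sup>*}"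
  shows "finite P \<and> card P \<le> card {e\<in>H. e \<subseteq> P} + 1"
proof -
  have sub: "P \<subseteq> insert u (\<Union>H)"
  proof
    fix v assume "v \<in> P"
    hence "(u,v) \<in> A\<^sup>*" unfolding P_def by simp
    thus "v \<in> insert u (\<Union>H)"
      by (cases rule: rtranclE) (auto simp: A_def)
  qed
  have finP: "finite P"
  proof -
    have "finite (\<Union>H)" using fin tw by (metis card.infinite finite_Union zero_neq_numeral)
    thus ?thesis using sub finite_subset by blast
  qed
  define dist where "dist v = (LEAST n. (u,v) \<in> A ^^ n)" for v
  have dist_in: "(u,v) \<in> A ^^ dist v" if vP: "v \<in> P" for v
  proof -
    obtain n where "(u,v) \<in> A ^^ n" using vP rtrancl_power[of "(u,v)" A] unfolding P_def by blast
    thus ?thesis unfolding dist_def by (rule LeastI)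
  qed
  have par_ex: "\<exists>w. (u,w) \<in> A ^^ (dist v - 1) \<and> (w,v) \<in> A \<and> dist v = Suc (dist v - 1)"
    if "v \<in> P" "v \<noteq> u" for v
  proof -
    have d: "(u,v) \<in> A ^^ dist v" using dist_in[OF that(1)] .
    have "dist v \<noteq> 0" using d that(2) by (metis relpow_0_E)
    then obtain n where n: "dist v = Suc n" using not0_implies_Suc by blast
    then obtain w where "(u,w) \<in> A ^^ n" "(w,v) \<in> A" using d by (metis relpow_Suc_E)
    thus ?thesis using n by auto
  qed
  define par where "par v = (SOME w. (u,w) \<in> A ^^ (dist v - 1) \<and> (w,v) \<in> A \<and> dist v = Suc (dist v - 1))" for v
  have par: "(u,par v) \<in> A ^^ (dist v - 1) \<and> (par v,v) \<in> A \<and> dist v = Suc (dist v - 1)"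
    if "v \<in> P" "v \<noteq> u" for v
    unfolding par_def using someI_ex[OF par_ex[OF that]] .
  have par_lt: "dist (par v) < dist v" if "v \<in> P" "v \<noteq> u" for v
  proof -
    have "dist (par v) \<le> dist v - 1" unfolding dist_def[of "par v"]
      using par[OF that] by (intro Least_le) simp
    thus ?thesis using par[OF that] by linarith
  qed
  have parP: "par v \<in> P" if "v \<in> P" "v \<noteq> u" for v
    using par[OF that] unfolding P_def by (auto simp: rtrancl_power)
  have inj: "inj_on (\<lambda>v. {par v, v}) (P - {u})"
  proof (rule inj_onI)
    fix v v' assume v: "v \<in> P - {u}" and v': "v' \<in> P - {u}" and eq: "{par v, v} = {par v', v'}"
    show "v = v'"
    proof (rule ccontr)
      assume "v \<noteq> v'"
      hence "par v = v' \<and> v = par v'" using eq by (auto simp: doubleton_eq_iff)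
      thus False using par_lt[of v] par_lt[of v'] v v' by auto
    qed
  qed
  have img: "(\<lambda>v. {par v, v}) ` (P - {u}) \<subseteq> {e\<in>H. e \<subseteq> P}"
    using par parP unfolding A_def by auto
  have "card (P - {u}) \<le> card {e\<in>H. e \<subseteq> P}"
    using card_inj_on_le[OF inj img] fin by auto
  moreover have "u \<in> P" unfolding P_def by simp
  ultimately have "card P \<le> card {e\<in>H. e \<subseteq> P} + 1"
    using finP card_Diff_singleton[of u P] card_gt_0_iff[of P] by fastforce
  thus ?thesis using finP by simp
qed

lemma handshake:
  assumes fin: "finite H" and tw: "\<forall>e\<in>H. card e = 2" and finP: "finite P"
    and clo: "\<And>e v. e \<in> H \<Longrightarrow> v \<in> e \<Longrightarrow> v \<in> P \<Longrightarrow> e \<subseteq> P"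
  shows "(\<Sum>v\<in>P. card {e\<in>H. v \<in> e}) = 2 * card {e\<in>H. e \<subseteq> P}"
proof -
  let ?HP = "{e\<in>H. e \<subseteq> P}"
  have finHP: "finite ?HP" using fin by simp
  have eq1: "{e\<in>H. v \<in> e} = {e\<in>?HP. v \<in> e}" if "v \<in> P" for v
    using clo that by blast
  have "(\<Sum>v\<in>P. card {e\<in>H. v \<in> e}) = (\<Sum>v\<in>P. card {e\<in>?HP. v \<in> e})"
    using eq1 by (intro sum.cong) auto
  also have "\<dots> = (\<Sum>v\<in>P. \<Sum>e\<in>?HP. if v \<in> e then 1 else 0)"
  proof (intro sum.cong refl)
    fix v
    show "card {e\<in>?HP. v \<in> e} = (\<Sum>e\<in>?HP. if v \<in> e then 1 else 0)"
      using sum.inter_filter[OF finHP, of "\<lambda>_. 1::nat" "\<lambda>e. v \<in> e"] by simp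
  qed
  also have "\<dots> = (\<Sum>e\<in>?HP. \<Sum>v\<in>P. if v \<in> e then 1 else 0)"
    by (rule sum.swap)
  also have "\<dots> = (\<Sum>e\<in>?HP. card e)"
  proof (intro sum.cong refl)
    fix e assume "e \<in> ?HP"
    hence "{v\<in>P. v \<in> e} = e" by blast
    thus "(\<Sum>v\<in>P. if v \<in> e then 1 else 0) = card e"
      using sum.inter_filter[OF finP, of "\<lambda>_. 1::nat" "\<lambda>v. v \<in> e"] by simp
  qed
  also have "\<dots> = (\<Sum>e\<in>?HP. 2)" using tw by (intro sum.cong) auto
  finally show ?thesis by simp
qed

lemma three_ends:
  assumes fin: "finite H" and tw: "\<forall>e\<in>H. card e = 2"
    and deg2: "\<And>v. card {e\<in>H. v \<in> e} \<le> 2"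
    and P: "P = {v. (u,v) \<in> {(u,w). {u,w} \<in> H}\<^sup>*}"
    and in3: "v1 \<in> P" "v2 \<in> P" "v3 \<in> P"
    and dist: "v1 \<noteq> v2" "v1 \<noteq> v3" "v2 \<noteq> v3"
    and d1: "card {e\<in>H. v1 \<in> e} \<le> 1" "card {e\<in>H. v2 \<in> e} \<le> 1" "card {e\<in>H. v3 \<in> e} \<le> 1"
  shows False
proof -
  let ?A = "{(u,w). {u,w} \<in> H}"
  have cc: "finite P \<and> card P \<le> card {e\<in>H. e \<subseteq> P} + 1"
    using conn_card[OF fin tw, of u] unfolding P by simp
  have clo: "e \<subseteq> P" if h: "e \<in> H" "v \<in> e" "v \<in> P" for e v
  proof -
    obtain x y where e: "e = {x,y}" using tw h(1) card2E by blast
    have xy: "(x,y) \<in> ?A" "(y,x) \<in> ?A" using h(1) e by (auto simp: insert_commute)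
    have vP: "(u,v) \<in> ?A\<^sup>*" using h(3) P by simp
    have "v = x \<or> v = y" using h(2) e by simp
    then have "(u,x) \<in> ?A\<^sup>* \<and> (u,y) \<in> ?A\<^sup>*"
    proof
      assume "v = x" thus ?thesis using vP rtrancl_into_rtrancl[OF _ xy(1)] by blast
    next
      assume "v = y" thus ?thesis using vP rtrancl_into_rtrancl[OF _ xy(2)] by blast
    qed
    thus ?thesis using e P by simp
  qed
  have hs: "(\<Sum>v\<in>P. card {e\<in>H. v \<in> e}) = 2 * card {e\<in>H. e \<subseteq> P}"
    using cc by (intro handshake[OF fin tw]) (blast, metis clo)
  let ?S = "{v1,v2,v3}"
  let ?d = "\<lambda>v. card {e\<in>H. v \<in> e}"
  have S: "?S \<subseteq> P" using in3 by auto
  have finP: "finite P" using cc by blast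
  have split: "sum ?d P = sum ?d ?S + sum ?d (P - ?S)"
    using finP S sum.subset_diff[of ?S P ?d] by simp
  have s1: "sum ?d ?S \<le> 3" using d1 dist by simp
  have s2: "sum ?d (P - ?S) \<le> 2 * card (P - ?S)"
    using sum_mono[of "P - ?S" ?d "\<lambda>_. 2"] deg2 by simp
  have cS: "card (P - ?S) = card P - 3" using finP S dist by (simp add: card_Diff_subset)
  have c3: "card P \<ge> 3" using card_mono[OF finP S] dist by simp
  have "2 * card {e\<in>H. e \<subseteq> P} \<le> 3 + 2 * (card P - 3)"
    using hs split s1 s2 cS by linarith
  thus False using cc c3 by linarith
qed


lemma shift:
  assumes pr: "proper F col c"
    and g: "g = {x, Y 0}" 
    and inj: "inj_on Y {0..k}" and nx: "\<forall>j\<le>k. Y j \<noteq> x"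
    and fan: "\<forall>j<k. {x, Y (Suc j)} \<in> F \<and> col {x, Y (Suc j)} = \<beta> j"
    and ms: "\<forall>j\<le>k. miss F col (Y j) (\<beta> j) \<and> \<beta> j < c"
    and mx: "miss F col x (\<beta> k)"
  shows "\<exists>col'. proper (insert g F) col' c"
proof -
  let ?T = "{e. \<exists>j\<le>k. e = {x, Y j}}"
  define col' where "col' e = (if e \<in> ?T then \<beta> (SOME j. j \<le> k \<and> e = {x, Y j}) else col e)" for e
  have cT: "col' {x, Y j} = \<beta> j" if "j \<le> k" for j
  proof -
    have ex: "\<exists>j'. j' \<le> k \<and> {x, Y j} = {x, Y j'}" using that by blast
    define j' where "j' = (SOME j'. j' \<le> k \<and> {x, Y j} = {x, Y j'})"
    have j': "j' \<le> k \<and> {x, Y j} = {x, Y j'}" unfolding j'_def using someI_ex[OF ex] .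
    have "Y j = Y j'" using j' nx that by (auto simp: doubleton_eq_iff)
    hence "j = j'" using inj j' that unfolding inj_on_def by auto
    thus ?thesis unfolding col'_def using that j'_def by auto
  qed
  have cN: "col' e = col e" if "e \<notin> ?T" for e using that unfolding col'_def by auto
  have gT: "g \<in> ?T" using g by auto
  have rng: "col' e < c" if "e \<in> insert g F" for e
  proof (cases "e \<in> ?T")
    case True then obtain j where "j \<le> k" "e = {x, Y j}" by blast
    thus ?thesis using cT ms by auto
  next
    case False then show ?thesis using that gT pr cN unfolding proper_def by auto
  qed
  have neq: "col' e \<noteq> col' f" if h: "e \<in> insert g F" "f \<in> insert g F" "e \<noteq> f" "e \<inter> f \<noteq> {}" for e f
  proof -
    have main: "col' e \<noteq> col' f" if eT: "e = {x, Y i}" "i \<le> k" and h2: "f \<in> insert g F" "e \<noteq> f" "e \<inter> f \<noteq> {}" for e f i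
    proof (cases "f \<in> ?T")
      case True
      then obtain j where j: "j \<le> k" "f = {x, Y j}" by blast
      have ij: "i \<noteq> j" using j eT h2 by auto
      have "\<beta> i \<noteq> \<beta> j"
      proof -
        have A: "\<beta> i \<noteq> \<beta> j" if "i < k" "j < k" "i \<noteq> j" for i j
        proof -
          have "{x, Y (Suc i)} \<noteq> {x, Y (Suc j)}"
          proof
            assume "{x, Y (Suc i)} = {x, Y (Suc j)}"
            hence "Y (Suc i) = Y (Suc j)" using nx that by (auto simp: doubleton_eq_iff)
            moreover have "Suc i \<in> {0..k}" "Suc j \<in> {0..k}" using that by auto
            ultimately have "Suc i = Suc j" using inj unfolding inj_on_def by blast
            thus False using that by simp
          qed
          moreover have "{x, Y (Suc i)} \<in> F" "{x, Y (Suc j)} \<in> F" using fan that by auto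
          ultimately show ?thesis using fan that proper_same[OF pr, of "{x, Y (Suc i)}" "{x, Y (Suc j)}" x]
            by auto
        qed
        have B: "\<beta> i \<noteq> \<beta> k" if "i < k" for i
          using fan that mx unfolding miss_def by auto
        show ?thesis using A B ij eT(2) j(1)
          by (metis antisym_conv1)
      qed
      thus ?thesis using cT eT j by simp
    next
      case False
      hence fF: "f \<in> F" using h2(1) gT by auto
      obtain v where v: "v \<in> e" "v \<in> f" using h2(3) by blast
      have "v = x \<or> v = Y i" using v eT by auto
      thus ?thesis
      proof
        assume vx: "v = x"
        show ?thesis
        proof (cases "i = k")
          case True
          then show ?thesis using mx fF v vx cT eT cN False unfolding miss_def by auto
        next
          case ik: False
          hence "i < k" using eT by simp
          hence f2: "{x, Y (Suc i)} \<in> F" "col {x, Y (Suc i)} = \<beta> i" using fan by auto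
          have "f \<noteq> {x, Y (Suc i)}" using False \<open>i < k\<close> by auto
          hence "col f \<noteq> col {x, Y (Suc i)}" using proper_same[OF pr fF f2(1), of x] v vx by auto
          then show ?thesis using f2 cT eT cN False by simp
        qed
      next
        assume vy: "v = Y i"
        have "col f \<noteq> \<beta> i" using ms eT(2) fF v(2) vy unfolding miss_def by blast
        thus ?thesis using eT cT cN False by simp
      qed
    qed
    show ?thesis
    proof (cases "e \<in> ?T")
      case True then obtain i where "i \<le> k" "e = {x, Y i}" by blast
      then show ?thesis using main h by blast
    next
      case eN: False
      show ?thesis
      proof (cases "f \<in> ?T")
        case True then obtain i where "i \<le> k" "f = {x, Y i}" by blast
        then show ?thesis using main[of f i e] h by (metis inf_commute)
      next
        case False
        have "e \<in> F" "f \<in> F" using eN False h(1,2) gT by auto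
        hence "col e \<noteq> col f" using pr h(3,4) unfolding proper_def by blast
        then show ?thesis using cN eN False by simp
      qed
    qed
  qed
  show ?thesis using rng neq unfolding proper_def by blast
qed


lemma hdeg2:
  assumes "finite F" "proper F col c"
  shows "card {e\<in>{e\<in>F. col e = a \<or> col e = b}. v \<in> e} \<le> 2"
proof -
  have "inj_on col {e\<in>{e\<in>F. col e = a \<or> col e = b}. v \<in> e}"
    unfolding inj_on_def using proper_same[OF assms(2)] by blast
  moreover have "col ` {e\<in>{e\<in>F. col e = a \<or> col e = b}. v \<in> e} \<subseteq> {a,b}" by auto
  ultimately have "card {e\<in>{e\<in>F. col e = a \<or> col e = b}. v \<in> e} \<le> card {a,b}"
    by (intro card_inj_on_le) auto
  also have "\<dots> \<le> 2" by (simp add: card_insert_le_m1)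
  finally show ?thesis .
qed

lemma hdeg1:
  assumes "finite F" "proper F col c" "miss F col v d" "d = a \<or> d = b"
  shows "card {e\<in>{e\<in>F. col e = a \<or> col e = b}. v \<in> e} \<le> 1"
proof -
  let ?S = "{e\<in>{e\<in>F. col e = a \<or> col e = b}. v \<in> e}"
  have "inj_on col ?S"
    unfolding inj_on_def using proper_same[OF assms(2)] by blast
  moreover have "col ` ?S \<subseteq> {if d = a then b else a}"
    using assms(3,4) unfolding miss_def by auto
  ultimately have "card ?S \<le> card {if d = a then b else a}"
    by (intro card_inj_on_le) auto
  thus ?thesis by simp
qed

lemma kadj_eq: "kadj F col a b = {(u,w). {u,w} \<in> {e\<in>F. col e = a \<or> col e = b}}"
  unfolding kadj_def by auto

lemma kadj_sym: "sym (kadj F col a b)"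
  unfolding kadj_def sym_def by (auto simp: insert_commute)

lemma comp_sym:
  assumes "w \<in> comp F col a b z" shows "z \<in> comp F col a b w"
proof -
  have "(z,w) \<in> (kadj F col a b)\<^sup>*" using assms unfolding comp_def by simp
  hence "(w,z) \<in> (kadj F col a b)\<^sup>*" using sym_rtrancl[OF kadj_sym[of F col a b]] unfolding sym_def by blast
  thus ?thesis unfolding comp_def by simp
qed

lemma comp_trans:
  assumes "w \<in> comp F col a b z" "y \<in> comp F col a b w" shows "y \<in> comp F col a b z"
  using assms unfolding comp_def by (auto intro: rtrancl_trans)

lemma comp_refl: "z \<in> comp F col a b z" unfolding comp_def by simp

lemma three_comp:
  assumes fin: "finite F" and tw: "\<forall>e\<in>F. card e = 2" and pr: "proper F col c"
    and in3: "v1 \<in> comp F col a b u" "v2 \<in> comp F col a b u" "v3 \<in> comp F col a b u"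
    and dist: "v1 \<noteq> v2" "v1 \<noteq> v3" "v2 \<noteq> v3"
    and m1: "miss F col v1 d1" "d1 = a \<or> d1 = b"
    and m2: "miss F col v2 d2" "d2 = a \<or> d2 = b"
    and m3: "miss F col v3 d3" "d3 = a \<or> d3 = b"
  shows False
proof -
  let ?H = "{e\<in>F. col e = a \<or> col e = b}"
  show False
  proof (rule three_ends[of ?H "comp F col a b u" u v1 v2 v3])
    show "finite ?H" using fin by simp
    show "\<forall>e\<in>?H. card e = 2" using tw by simp
    show "\<And>v. card {e\<in>?H. v \<in> e} \<le> 2" using hdeg2[OF fin pr] by blast
    show "comp F col a b u = {v. (u,v) \<in> {(u,w). {u,w} \<in> ?H}\<^sup>*}"
      unfolding comp_def kadj_eq ..
  qed (use in3 dist hdeg1[OF fin pr m1] hdeg1[OF fin pr m2] hdeg1[OF fin pr m3] in auto)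
qed


lemma degree_mono_ins:
  assumes "finite F" shows "degree F v \<le> degree (insert g F) v"
  unfolding degree_def using assms by (intro card_mono) auto

lemma vizing_step:
  assumes fin: "finite F" and tw: "\<forall>e\<in>insert g F. card e = 2" and gF: "g \<notin> F"
    and deg: "\<forall>v. degree (insert g F) v \<le> D" and pr: "proper F col (Suc D)"
  shows "\<exists>col'. proper (insert g F) col' (Suc D)"
proof -
  define c where "c = Suc D"
  have prc: "proper F col c" using pr c_def by simp
  have twF: "\<forall>e\<in>F. card e = 2" using tw by simp
  obtain x y0 where g: "g = {x, y0}" "x \<noteq> y0" using tw card2E by blast
  have exm: "\<exists>a<c. miss F col v a" for v
  proof -
    have "degree F v \<le> D" using degree_mono_ins[OF fin, of v g] deg by (meson le_trans)
    thus ?thesis using exists_miss[OF fin prc] c_def by simp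
  qed
  define \<alpha> where "\<alpha> v = (SOME a. a < c \<and> miss F col v a)" for v
  have \<alpha>: "\<alpha> v < c \<and> miss F col v (\<alpha> v)" for v
    unfolding \<alpha>_def using someI_ex[OF exm[of v]] by blast
  define s where "s y = (SOME z. {x,z} \<in> F \<and> col {x,z} = \<alpha> y)" for y
  have s: "{x, s y} \<in> F \<and> col {x, s y} = \<alpha> y" if nm: "\<not> miss F col x (\<alpha> y)" for y
  proof -
    obtain e where e: "e \<in> F" "x \<in> e" "col e = \<alpha> y" using nm unfolding miss_def by blast
    obtain u w where uw: "e = {u,w}" "u \<noteq> w" using twF e(1) card2E by blast
    have "e = {x, if x = u then w else u}" using e(2) uw by auto
    then obtain z where "e = {x,z}" by blast
    hence ex: "\<exists>z. {x,z} \<in> F \<and> col {x,z} = \<alpha> y" using e by blast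
    show ?thesis unfolding s_def using someI_ex[OF ex] .
  qed
  define Y where "Y = rec_nat y0 (\<lambda>_. s)"
  have Y0: "Y 0 = y0" and YS: "Y (Suc n) = s (Y n)" for n unfolding Y_def by simp_all
  define stop where "stop n \<longleftrightarrow> miss F col x (\<alpha> (Y n)) \<or> (\<exists>i\<le>n. Y (Suc n) = Y i)" for n
  have exstop: "\<exists>n. stop n"
  proof (rule ccontr)
    assume "\<not> (\<exists>n. stop n)"
    hence ns: "\<And>n. \<not> stop n" by blast
    have "inj Y"
    proof (rule injI)
      fix i j assume eq: "Y i = Y j"
      show "i = j"
      proof (rule ccontr)
        assume "i \<noteq> j"
        then consider "i < j" | "j < i" by linarith
        thus False
        proof cases
          case 1 then obtain j' where "j = Suc j'" "i \<le> j'" by (cases j) auto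
          thus False using ns[of j'] eq unfolding stop_def by auto
        next
          case 2 then obtain i' where "i = Suc i'" "j \<le> i'" by (cases i) auto
          thus False using ns[of i'] eq unfolding stop_def by auto
        qed
      qed
    qed
    moreover have "range Y \<subseteq> insert y0 (\<Union>F)"
    proof
      fix y assume "y \<in> range Y"
      then obtain n where n: "y = Y n" by blast
      show "y \<in> insert y0 (\<Union>F)"
      proof (cases n)
        case 0 thus ?thesis using n Y0 by simp
      next
        case (Suc n')
        have "{x, s (Y n')} \<in> F" using s ns[of n'] unfolding stop_def by blast
        thus ?thesis using n Suc YS by blast
      qed
    qed
    moreover have "finite (\<Union>F)" using fin twF by (metis card.infinite finite_Union zero_neq_numeral)
    ultimately have "finite (range Y)" using finite_subset by blast
    hence "finite (UNIV :: nat set)" using finite_imageD \<open>inj Y\<close> by blast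
    thus False by simp
  qed
  define k where "k = (LEAST n. stop n)"
  have stopk: "stop k" unfolding k_def using exstop by (rule LeastI_ex)
  have nstop: "\<not> stop n" if "n < k" for n using that unfolding k_def by (rule not_less_Least)
  have P1: "{x, Y (Suc j)} \<in> F \<and> col {x, Y (Suc j)} = \<alpha> (Y j)" if "j < k" for j
    using nstop[OF that] s YS unfolding stop_def by auto
  have P2': "Y j \<noteq> Y i" if ij: "i < j" "j \<le> k" for i j
  proof -
    obtain j' where "j = Suc j'" "i \<le> j'" using ij(1) by (cases j) auto
    thus ?thesis using nstop[of j'] ij unfolding stop_def by auto
  qed
  have P2: "inj_on Y {0..k}"
  proof (rule inj_onI)
    fix i j assume "i \<in> {0..k}" "j \<in> {0..k}" "Y i = Y j"
    thus "i = j" using P2'[of i j] P2'[of j i] by (cases i j rule: linorder_cases) auto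
  qed
  have P3: "Y j \<noteq> x" if "j \<le> k" for j
  proof (cases j)
    case 0 thus ?thesis using Y0 g by auto
  next
    case (Suc j')
    hence "{x, Y j} \<in> F" using P1[of j'] that by auto
    hence "card {x, Y j} = 2" using twF by blast
    thus ?thesis by auto
  qed
  have ginsert: "g = {x, Y 0}" using g Y0 by simp
  show ?thesis
  proof (cases "miss F col x (\<alpha> (Y k))")
    case True
    show ?thesis unfolding c_def[symmetric]
      by (rule shift[OF prc ginsert P2, of "\<lambda>j. \<alpha> (Y j)"]) (use P3 P1 \<alpha> True in auto)
  next
    case nmx: False
    obtain i where i: "i \<le> k" "Y (Suc k) = Y i" using stopk nmx unfolding stop_def by blast
    define a where "a = \<alpha> (Y k)"
    have ea: "{x, Y i} \<in> F" "col {x, Y i} = a" using s[OF nmx] i YS a_def by auto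
    have i0: "i \<noteq> 0"
    proof
      assume "i = 0"
      thus False using ea(1) Y0 g(1) gF by simp
    qed
    then obtain i' where i': "i = Suc i'" by (cases i) auto
    have i'k: "i' < k" using i i' by simp
    have ai': "\<alpha> (Y i') = a" using P1[OF i'k] ea i' by simp
    define b where "b = (SOME b. b < c \<and> miss F col x b)"
    have b: "b < c" "miss F col x b" unfolding b_def using someI_ex[OF exm[of x]] by auto
    have ab: "a \<noteq> b" using ea b(2) unfolding miss_def by auto
    have ac: "a < c" using \<alpha> a_def by simp
    have notb: "\<alpha> (Y j) \<noteq> b" if "j < k" for j
      using P1[OF that] b(2) unfolding miss_def by auto
    have nota: "\<alpha> (Y j) \<noteq> a" if "j < k" "j \<noteq> i'" for j
    proof
      assume "\<alpha> (Y j) = a"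
      hence "col {x, Y (Suc j)} = col {x, Y (Suc i')}" using P1[OF that(1)] P1[OF i'k] ai' by simp
      hence "{x, Y (Suc j)} = {x, Y (Suc i')}"
        using proper_same[OF prc, of "{x, Y (Suc j)}" "{x, Y (Suc i')}" x] P1[OF that(1)] P1[OF i'k] by auto
      hence "Y (Suc j) = Y (Suc i')" using P3[of "Suc j"] P3[of "Suc i'"] that i'k
        by (auto simp: doubleton_eq_iff)
      moreover have "Suc j \<in> {0..k}" "Suc i' \<in> {0..k}" using that i'k by auto
      ultimately have "Suc j = Suc i'" using inj_onD[OF P2] by blast
      thus False using that by simp
    qed
    let ?P = "comp F col a b x"
    have xP: "x \<in> ?P" by (rule comp_refl)
    show ?thesis
    proof (cases "Y i' \<in> ?P")
      case False
      let ?c1 = "kswap F col a b ?P"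
      have pr1: "proper F ?c1 c" using kswap_proper[OF twF prc ac b(1)] .
      have "\<exists>col'. proper (insert g F) col' c"
      proof (rule shift[where x=x and Y=Y and k=i' and \<beta>="\<lambda>j. \<alpha> (Y j)", OF pr1 ginsert])
        show "inj_on Y {0..i'}" using i'k by (intro inj_on_subset[OF P2]) auto
        show "\<forall>j\<le>i'. Y j \<noteq> x" using P3 i'k by auto
        show "\<forall>j<i'. {x, Y (Suc j)} \<in> F \<and> ?c1 {x, Y (Suc j)} = \<alpha> (Y j)"
        proof (intro allI impI)
          fix j assume "j < i'"
          hence jk: "j < k" "j \<noteq> i'" using i'k by auto
          have "?c1 {x, Y (Suc j)} = col {x, Y (Suc j)}"
            using P1[OF jk(1)] notb[OF jk(1)] nota[OF jk] unfolding kswap_def by auto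
          thus "{x, Y (Suc j)} \<in> F \<and> ?c1 {x, Y (Suc j)} = \<alpha> (Y j)" using P1[OF jk(1)] by simp
        qed
        show "\<forall>j\<le>i'. miss F ?c1 (Y j) (\<alpha> (Y j)) \<and> \<alpha> (Y j) < c"
        proof (intro allI impI conjI)
          fix j assume j: "j \<le> i'"
          show "\<alpha> (Y j) < c" using \<alpha> by simp
          show "miss F ?c1 (Y j) (\<alpha> (Y j))"
          proof (cases "j = i'")
            case True
            then show ?thesis using kswap_miss_out[OF False] \<alpha> by simp
          next
            case ne: False
            hence jk: "j < k" "j \<noteq> i'" using j i'k by auto
            show ?thesis
            proof (cases "Y j \<in> ?P")
              case True
              have "swc a b (\<alpha> (Y j)) = \<alpha> (Y j)"
                using notb[OF jk(1)] nota[OF jk] unfolding swc_def by auto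
              then show ?thesis using kswap_miss_in[OF twF True ab] \<alpha> by simp
            next
              case False
              then show ?thesis using kswap_miss_out[OF False] \<alpha> by simp
            qed
          qed
        qed
        show "miss F ?c1 x (\<alpha> (Y i'))"
          using kswap_miss_in[OF twF xP ab] b(2) ai' unfolding swc_def by simp
      qed
      thus ?thesis unfolding c_def .
    next
      case True
      have ki: "Y k \<noteq> Y i'" using P2' i'k by auto
      have nk: "Y k \<notin> ?P"
      proof
        assume "Y k \<in> ?P"
        show False
        proof (rule three_comp[OF fin twF prc xP True \<open>Y k \<in> ?P\<close>])
          show "x \<noteq> Y i'" "x \<noteq> Y k" using P3[of i'] P3[of k] i'k by auto
          show "Y i' \<noteq> Y k" using ki by simp
          show "miss F col x b" by (rule b(2))
          show "miss F col (Y i') a" using \<alpha> ai' by metis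
          show "miss F col (Y k) a" using \<alpha> a_def by metis
        qed auto
      qed
      let ?Q = "comp F col a b (Y k)"
      have kQ: "Y k \<in> ?Q" by (rule comp_refl)
      have xQ: "x \<notin> ?Q"
      proof
        assume "x \<in> ?Q" thus False using nk comp_sym[of x F col a b "Y k"] by blast
      qed
      have iQ: "Y i' \<notin> ?Q"
      proof
        assume "Y i' \<in> ?Q"
        hence "Y k \<in> comp F col a b (Y i')" by (rule comp_sym)
        hence "Y k \<in> ?P" using comp_trans[OF True] by blast
        thus False using nk by blast
      qed
      let ?c1 = "kswap F col a b ?Q"
      have pr1: "proper F ?c1 c" using kswap_proper[OF twF prc ac b(1)] .
      have "\<exists>col'. proper (insert g F) col' c"
      proof (rule shift[where x=x and Y=Y and k=k and \<beta>="\<lambda>j. if j < k then \<alpha> (Y j) else b", OF pr1 ginsert P2])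
        show "\<forall>j\<le>k. Y j \<noteq> x" using P3 by auto
        show "\<forall>j<k. {x, Y (Suc j)} \<in> F \<and> ?c1 {x, Y (Suc j)} = (if j < k then \<alpha> (Y j) else b)"
          using P1 kswap_out[OF xQ] by simp
        show "\<forall>j\<le>k. miss F ?c1 (Y j) (if j < k then \<alpha> (Y j) else b) \<and> (if j < k then \<alpha> (Y j) else b) < c"
        proof (intro allI impI conjI)
          fix j assume j: "j \<le> k"
          show "(if j < k then \<alpha> (Y j) else b) < c" using \<alpha> b by simp
          show "miss F ?c1 (Y j) (if j < k then \<alpha> (Y j) else b)"
          proof (cases "j < k")
            case False
            hence "j = k" using j by simp
            thus ?thesis using kswap_miss_in[OF twF kQ ab] \<alpha> a_def unfolding swc_def by simp
          next
            case jk: True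
            show ?thesis
            proof (cases "Y j \<in> ?Q")
              case True
              have "j \<noteq> i'" using True iQ by auto
              hence "swc a b (\<alpha> (Y j)) = \<alpha> (Y j)"
                using notb[OF jk] nota[OF jk] unfolding swc_def by auto
              then show ?thesis using kswap_miss_in[OF twF True ab] \<alpha> jk by simp
            next
              case False
              then show ?thesis using kswap_miss_out[OF False] \<alpha> jk by simp
            qed
          qed
        qed
        show "miss F ?c1 x (if k < k then \<alpha> (Y k) else b)"
          using kswap_miss_out[OF xQ] b(2) by simp
      qed
      thus ?thesis unfolding c_def .
    qed
  qed
qed


theorem vizing:
  assumes "finite E" "\<forall>e\<in>E. card e = 2" "\<forall>v. degree E v \<le> D"
  shows "\<exists>col. proper E col (Suc D)"
  using assms
proof (induction E rule: finite_induct)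
  case empty
  show ?case unfolding proper_def by auto
next
  case (insert g F)
  have "\<forall>v. degree F v \<le> D"
    using insert.prems(2) degree_mono_ins[OF insert.hyps(1)] le_trans by blast
  then obtain col where "proper F col (Suc D)" using insert by auto
  thus ?case using vizing_step[OF insert.hyps(1) insert.prems(1) insert.hyps(2) insert.prems(2)] by blast
qed

lemma deg_col_le:
  assumes pr: "proper E col c" and sub: "A \<subseteq> E" and finA: "finite A" and fin: "finite K"
    and colK: "\<forall>e\<in>A. v \<in> e \<longrightarrow> col e \<in> K"
  shows "card {e\<in>A. v \<in> e} \<le> card K"
proof -
  have "inj_on col {e\<in>A. v \<in> e}"
    unfolding inj_on_def using proper_same[OF pr] sub by blast
  moreover have "col ` {e\<in>A. v \<in> e} \<subseteq> K" using colK by auto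
  ultimately show ?thesis using fin by (intro card_inj_on_le) auto
qed

lemma avg_step:
  fixes j E S X c a :: int
  assumes h1: "j * E \<le> c * S" and h2: "E - S \<le> a * X" and a: "a > 0" and c: "c = j + a"
    and j: "j \<ge> 0" and S: "S \<ge> 0"
  shows "(j + 1) * E \<le> c * (S + X)"
proof -
  have c0: "c \<ge> 0" using c a j by simp
  have "a * (c * (S + X)) = c * (a * S) + c * (a * X)" by (simp add: algebra_simps)
  also have "\<dots> \<ge> c * (a * S) + c * (E - S)" using mult_left_mono[OF h2 c0] by simp
  finally have 1: "a * (c * (S + X)) \<ge> (c * S) * (a - 1) + c * E" by (simp add: algebra_simps)
  have "(c * S) * (a - 1) \<ge> (j * E) * (a - 1)" using mult_right_mono[OF h1] a by simp
  hence "a * (c * (S + X)) \<ge> (j * E) * (a - 1) + c * E" using 1 by linarith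
  also have "(j * E) * (a - 1) + c * E = a * ((j + 1) * E)" using c by (simp add: algebra_simps)
  finally show ?thesis using a by (simp add: mult_le_cancel_left)
qed

theorem lemma4p1:
  fixes V :: "'a set" and E :: "'a set set" and m :: nat
  assumes "graph V E"
    and "E \<noteq> {}"
    and "0 < m" and "m \<le> card E"
  shows "\<exists>E'. E' \<subseteq> E \<and> card E' = m \<and>
     int (max_degree V E') - int (min_degree V E')
       \<le> int (max_degree V E) - int (min_degree V E) + 2 \<and>
     real (max_degree V (E - E'))
       \<le> (real (max_degree V E) + 1) * ((real (card E) - real m) / real (card E)) + 1"
proof -
  define \<Delta> where "\<Delta> = max_degree V E"
  define \<delta> where "\<delta> = min_degree V E"
  define ne where "ne = card E"
  define k where "k = ne - m"
  define c where "c = Suc \<Delta>"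
  have finV: "finite V" and edges: "\<forall>e\<in>E. e \<subseteq> V \<and> card e = 2"
    using assms(1) unfolding graph_def by auto
  have finE: "finite E"
  proof -
    have "E \<subseteq> Pow V" using edges by auto
    thus ?thesis using finV finite_subset by blast
  qed
  have tw: "\<forall>e\<in>E. card e = 2" using edges by auto
  have nepos: "ne > 0" using finE assms(2) ne_def by (simp add: card_gt_0_iff)
  have kl: "k < ne" using k_def assms(3,4) ne_def by simp
  have Vne: "V \<noteq> {}"
  proof -
    obtain e0 where "e0 \<in> E" using assms(2) by blast
    hence "e0 \<subseteq> V" "card e0 = 2" using edges by auto
    thus ?thesis by auto
  qed
  have degle: "degree E v \<le> \<Delta>" for v
  proof (cases "v \<in> V")
    case True thus ?thesis unfolding \<Delta>_def max_degree_def using finV by simp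
  next
    case False
    hence "{e\<in>E. v \<in> e} = {}" using edges by auto
    hence "degree E v = 0" unfolding degree_def by (simp only: card.empty)
    thus ?thesis by simp
  qed
  obtain col where pr: "proper E col c" using vizing[OF finE tw] degle c_def by blast
  have colc: "col e < c" if "e \<in> E" for e using pr that unfolding proper_def by auto
  define C where "C i = {e\<in>E. col e = i}" for i
  define S where "S J = (\<Sum>i\<in>J. card (C i))" for J
  have finC: "finite (C i)" for i using finE unfolding C_def by simp
  have cardU: "card (\<Union>i\<in>J. C i) = S J" if "finite J" for J
    unfolding S_def using that finC by (intro card_UN_disjoint) (auto simp: C_def)
  have Eall: "E = (\<Union>i\<in>{0..<c}. C i)" using colc unfolding C_def by auto
  have Sall: "S {0..<c} = ne" using cardU[of "{0..<c}"] Eall ne_def by simp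
  define good where "good J \<longleftrightarrow> J \<subseteq> {0..<c} \<and> S J \<le> k \<and> card J * ne \<le> c * S J" for J
  define G where "G = {J. good J}"
  have finG: "finite G" unfolding G_def good_def
    by (rule finite_subset[of _ "Pow {0..<c}"]) auto
  have emG: "{} \<in> G" unfolding G_def good_def S_def by simp
  define M where "M = Max (card ` G)"
  have "M \<in> card ` G" unfolding M_def using finG emG by (intro Max_in) auto
  then obtain J where JG: "J \<in> G" and JM: "card J = M" by auto
  have Jmax: "card J' \<le> card J" if "good J'" for J'
    using Max_ge[of "card ` G" "card J'"] finG that JM M_def G_def by auto
  have gJ: "good J" using JG G_def by simp
  have Jsub: "J \<subseteq> {0..<c}" and SJk: "S J \<le> k" and Jdens: "card J * ne \<le> c * S J"
    using gJ unfolding good_def by auto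
  have finJ: "finite J" using Jsub finite_subset by blast
  define R0 where "R0 = {0..<c} - J"
  have finR0: "finite R0" unfolding R0_def by simp
  have cardR0: "card R0 = c - card J" unfolding R0_def using Jsub by (simp add: card_Diff_subset finJ)
  have Ssplit: "S {0..<c} = S J + S R0"
    unfolding S_def R0_def using Jsub sum.subset_diff[of J "{0..<c}" "\<lambda>i. card (C i)"] by (simp add: add.commute)
  have exi0: "\<exists>i0\<in>R0. k \<le> S J + card (C i0)"
  proof (rule ccontr)
    assume "\<not> ?thesis"
    hence lt: "\<forall>i\<in>R0. S J + card (C i) < k" by auto
    have R0ne: "R0 \<noteq> {}"
    proof
      assume "R0 = {}"
      hence "S R0 = 0" unfolding S_def by simp
      thus False using Ssplit Sall SJk kl by simp
    qed
    define X where "X = Max ((\<lambda>i. card (C i)) ` R0)"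
    have "X \<in> (\<lambda>i. card (C i)) ` R0" unfolding X_def using finR0 R0ne by (intro Max_in) auto
    then obtain i0 where i0: "i0 \<in> R0" "card (C i0) = X" by auto
    have Xge: "card (C i) \<le> X" if "i \<in> R0" for i
      using Max_ge[of "(\<lambda>i. card (C i)) ` R0"] finR0 that X_def by auto
    have SR: "S R0 \<le> card R0 * X"
      unfolding S_def using sum_bounded_above[of R0 "\<lambda>i. card (C i)" X] Xge by simp
    let ?J' = "insert i0 J"
    have i0J: "i0 \<notin> J" "i0 < c" using i0 R0_def by auto
    have SJ': "S ?J' = S J + X" unfolding S_def using finJ i0J i0 by simp
    have cJ': "card ?J' = card J + 1" using finJ i0J by simp
    have jc: "card J < c" using cardR0 R0ne finR0 card_0_eq[OF finR0] by auto
    have dens: "(int (card J) + 1) * int ne \<le> int c * (int (S J) + int X)"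
    proof (rule avg_step[where a = "int c - int (card J)"])
      show "int (card J) * int ne \<le> int c * int (S J)" using Jdens by (metis of_nat_le_iff of_nat_mult)
      have "ne - S J \<le> (c - card J) * X" using SR cardR0 Ssplit Sall by simp
      moreover have "S J \<le> ne" using Ssplit Sall by simp
      ultimately show "int ne - int (S J) \<le> (int c - int (card J)) * int X"
        using jc by (metis of_nat_diff of_nat_le_iff of_nat_mult less_imp_le_nat)
    qed (use jc in auto)
    have "good ?J'"
      unfolding good_def
    proof (intro conjI)
      show "?J' \<subseteq> {0..<c}" using Jsub i0J by auto
      show "S ?J' \<le> k" using SJ' lt i0 by fastforce
      have "int (card ?J' * ne) \<le> int (c * S ?J')" using dens cJ' SJ' by (simp add: algebra_simps)
      thus "card ?J' * ne \<le> c * S ?J'" by linarith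
    qed
    thus False using Jmax cJ' by fastforce
  qed
  obtain i0 where i0: "i0 \<in> R0" "k \<le> S J + card (C i0)" using exi0 by blast
  have i0J: "i0 \<notin> J" "i0 < c" using i0 R0_def by auto
  obtain P where P: "P \<subseteq> C i0" "card P = k - S J"
    using obtain_subset_with_card_n[of "k - S J" "C i0"] i0(2) by (metis le_diff_conv add.commute)
  define R where "R = (\<Union>i\<in>J. C i) \<union> P"
  have RE: "R \<subseteq> E" unfolding R_def C_def using P(1) C_def by auto
  have finP: "finite P" using P(1) finC finite_subset by blast
  have disj: "(\<Union>i\<in>J. C i) \<inter> P = {}" using P(1) i0J unfolding C_def by auto
  have cardR: "card R = k"
    unfolding R_def using card_Un_disjoint[OF _ finP disj] cardU[OF finJ] finJ finC P(2) SJk by simp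
  define E' where "E' = E - R"
  have E'E: "E' \<subseteq> E" unfolding E'_def by auto
  have cardE': "card E' = m"
    unfolding E'_def using card_Diff_subset[OF _ RE] finE RE cardR k_def ne_def assms(4)
    by (metis diff_diff_cancel finite_subset)
  have EE': "E - E' = R" unfolding E'_def using RE by auto
  have degR: "degree R v \<le> card J + 1" for v
  proof -
    have "{e\<in>R. v \<in> e} = {e\<in>(\<Union>i\<in>J. C i). v \<in> e} \<union> {e\<in>P. v \<in> e}" unfolding R_def by auto
    hence "degree R v \<le> card {e\<in>(\<Union>i\<in>J. C i). v \<in> e} + card {e\<in>P. v \<in> e}"
      unfolding degree_def by (metis card_Un_le)
    moreover have "card {e\<in>(\<Union>i\<in>J. C i). v \<in> e} \<le> card J"
      by (rule deg_col_le[OF pr]) (use finJ finC in \<open>auto simp: C_def\<close>)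
    moreover have "card {e\<in>P. v \<in> e} \<le> card {i0}"
      by (rule deg_col_le[OF pr]) (use finP P(1) in \<open>auto simp: C_def\<close>)
    ultimately show ?thesis by simp
  qed
  have degE'up: "degree E' v \<le> c - card J" for v
  proof -
    have "degree E' v \<le> card ({0..<c} - J)"
      unfolding degree_def
    proof (rule deg_col_le[OF pr E'E])
      show "finite E'" using E'E finE finite_subset by blast
      show "\<forall>e\<in>E'. v \<in> e \<longrightarrow> col e \<in> {0..<c} - J"
        using colc unfolding E'_def R_def C_def by auto
    qed simp
    thus ?thesis using Jsub finJ by (simp add: card_Diff_subset)
  qed
  have degsplit: "degree E v = degree E' v + degree R v" for v
  proof -
    have "{e\<in>E. v \<in> e} = {e\<in>E'. v \<in> e} \<union> {e\<in>R. v \<in> e}" using RE unfolding E'_def by auto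
    moreover have "{e\<in>E'. v \<in> e} \<inter> {e\<in>R. v \<in> e} = {}" unfolding E'_def by auto
    moreover have "finite {e\<in>E'. v \<in> e}" "finite {e\<in>R. v \<in> e}"
      using finE RE unfolding E'_def by (auto intro: finite_subset)
    ultimately show ?thesis unfolding degree_def by (simp add: card_Un_disjoint)
  qed
  have maxE': "max_degree V E' \<le> c - card J"
    unfolding max_degree_def using finV Vne degE'up by simp
  have "min_degree V E' \<in> degree E' ` V" unfolding min_degree_def using finV Vne by (intro Min_in) auto
  then obtain w where wV: "w \<in> V" and wmin: "min_degree V E' = degree E' w" by auto
  have dw: "\<delta> \<le> degree E w" unfolding \<delta>_def min_degree_def using finV wV by simp
  have minE': "int (min_degree V E') \<ge> int \<delta> - int (card J) - 1"
    using wmin degsplit[of w] degR[of w] dw by linarith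
  have maxR: "max_degree V (E - E') \<le> card J + 1"
    unfolding max_degree_def EE' using finV Vne degR by simp
  have jc: "card J \<le> c" using card_mono[OF _ Jsub] by simp
  have "int (max_degree V E') \<le> int (c - card J)" using maxE' by (simp only: of_nat_le_iff)
  also have "\<dots> = int c - int (card J)" using jc by (rule of_nat_diff)
  finally have maxE'i: "int (max_degree V E') \<le> int c - int (card J)" .
  have S1: "int (max_degree V E') - int (min_degree V E') \<le> int \<Delta> - int \<delta> + 2"
    using maxE'i minE' c_def by simp
  have jk: "real (card J) * real ne \<le> real c * real k"
  proof -
    have "card J * ne \<le> c * k" using Jdens SJk by (meson le_trans mult_le_mono2)
    thus ?thesis by (metis of_nat_le_iff of_nat_mult)
  qed
  have jr: "real (card J) \<le> real c * real k / real ne"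
    using jk nepos by (simp add: field_simps)
  have kr: "real k = real ne - real m" using k_def assms(4) ne_def by simp
  have cr: "real c = real \<Delta> + 1" using c_def by simp
  have "real (max_degree V (E - E')) \<le> real (card J) + 1" using maxR by simp
  also have "\<dots> \<le> real c * real k / real ne + 1" using jr by simp
  also have "\<dots> = (real \<Delta> + 1) * ((real ne - real m) / real ne) + 1" using kr cr by simp
  finally have S2: "real (max_degree V (E - E')) \<le> (real \<Delta> + 1) * ((real ne - real m) / real ne) + 1" .
  show ?thesis using E'E cardE' S1 S2 unfolding \<Delta>_def \<delta>_def ne_def by blast
qed


end
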